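(* Let $(R,\mathfrak{m})$ be a commutative Artinian local ring with identity, $\mathfrak{m}\neq0$ and $\mathfrak{m}^2=0$. For every positive integer $n$, $n-1\notin L(x^n)$; and if $n$ is odd, then $2\notin L(x^n)$.
   Context: A nonunit polynomial in $R[x]$ is irreducible if in any factorization into two polynomials one factor is a unit of $R[x]$. A positive integer $k$ is a length of $f\in R[x]$ if $f$ is a product of $k$ irreducible polynomials of $R[x]$; $L(f)$ denotes the set of lengths of $f$. *)

theory Defs
  imports "HOL-Computational_Algebra.Polynomial" "HOL-Computational_Algebra.Factorial_Ring"
begin

definition is_ideal :: "'a::comm_ring_1 set \<Rightarrow> bool" where
  "is_ideal I \<longleftrightarrow> 0 \<in> I \<and> (\<forall>a\<in>I. \<forall>b\<in>I. a + b \<in> I) \<and> (\<forall>r. \<forall>a\<in>I. r * a \<in> I)"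

definition maximal_ideal :: "'a::comm_ring_1 set \<Rightarrow> bool" where
  "maximal_ideal M \<longleftrightarrow> is_ideal M \<and> M \<noteq> UNIV \<and>
     (\<forall>J. is_ideal J \<and> M \<subseteq> J \<longrightarrow> J = M \<or> J = UNIV)"

definition local_ring_with_max :: "'a::comm_ring_1 set \<Rightarrow> bool" where
  "local_ring_with_max M \<longleftrightarrow> maximal_ideal M \<and> (\<forall>N. maximal_ideal N \<longrightarrow> N = M)"

definition artinian_ring :: "'a::comm_ring_1 itself \<Rightarrow> bool" where
  "artinian_ring _ \<longleftrightarrow> (\<forall>I :: nat \<Rightarrow> 'a set. (\<forall>k. is_ideal (I k) \<and> I (Suc k) \<subseteq> I k)
       \<longrightarrow> (\<exists>N. \<forall>k\<ge>N. I k = I N))"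

definition lengths :: "'a::comm_ring_1 poly \<Rightarrow> nat set" where
  "lengths f = {k. k > 0 \<and> (\<exists>fs. length fs = k \<and> (\<forall>g\<in>set fs. irreducible g) \<and> prod_list fs = f)}"

end

theory Submission
  imports Defs
begin

lemma coeff_xpow: "coeff ([:0, 1:] ^ n :: 'a::comm_ring_1 poly) j = (if j = n then 1 else 0)"
proof -
  have "[:0,1:]^n = monom (1::'a) n" by (simp add: monom_altdef)
  then show ?thesis by simp
qed

lemma prod_list_remove1: "x \<in> set xs \<Longrightarrow> prod_list xs = x * prod_list (remove1 x (xs :: 'a::comm_monoid_mult list))"
  by (induct xs) (auto simp: ac_simps)

lemma sum_list_ge_length: "(\<forall>f\<in>set xs. 1 \<le> h f) \<Longrightarrow> length xs \<le> sum_list (map h xs)"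
  by (induct xs) auto

lemma sum_list_eq_length: "(\<forall>f\<in>set xs. 1 \<le> (h f::nat)) \<Longrightarrow> sum_list (map h xs) = length xs \<Longrightarrow> \<forall>f\<in>set xs. h f = 1"
proof (induct xs)
  case Nil then show ?case by simp
next
  case (Cons a xs)
  have "length xs \<le> sum_list (map h xs)" using Cons.prems(1) sum_list_ge_length[of xs h] by auto
  moreover have "1 \<le> h a" using Cons.prems(1) by auto
  ultimately have "h a = 1" "sum_list (map h xs) = length xs" using Cons.prems(2) by auto
  then show ?case using Cons by auto
qed

definition goodd :: "'a::comm_ring_1 set \<Rightarrow> 'a poly \<Rightarrow> nat \<Rightarrow> bool" where
  "goodd M f d \<longleftrightarrow> coeff f d \<notin> M \<and> (\<forall>j. j \<noteq> d \<longrightarrow> coeff f j \<in> M)"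

locale lr =
  fixes M :: "'a::comm_ring_1 set"
  assumes idl: "is_ideal M" and ne: "M \<noteq> UNIV"
    and mx: "\<And>J. is_ideal J \<Longrightarrow> M \<subseteq> J \<Longrightarrow> J = M \<or> J = UNIV"
    and sq: "\<And>a b. a \<in> M \<Longrightarrow> b \<in> M \<Longrightarrow> a * b = 0"
begin

lemma M0: "0 \<in> M" using idl by (simp add: is_ideal_def)
lemma Madd: "a \<in> M \<Longrightarrow> b \<in> M \<Longrightarrow> a + b \<in> M" using idl by (simp add: is_ideal_def)
lemma Mmul: "a \<in> M \<Longrightarrow> r * a \<in> M" using idl by (simp add: is_ideal_def)
lemma Mmul2: "a \<in> M \<Longrightarrow> a * r \<in> M" using Mmul[of a r] by (simp add: mult.commute)

lemma one_notin: "1 \<notin> M"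
proof
  assume "1 \<in> M"
  then have "\<forall>r. r \<in> M" using Mmul[of 1] by auto
  then show False using ne by auto
qed

lemma notin_of_unit: "a * b = 1 \<Longrightarrow> a \<notin> M"
  using Mmul2[of a b] one_notin by auto

lemma unit_of_notin:
  assumes "a \<notin> M" shows "\<exists>b. a * b = 1"
proof -
  define J where "J = {m + r * a | m r. m \<in> M}"
  have "is_ideal J" unfolding is_ideal_def J_def
  proof (intro conjI ballI allI)
    show "0 \<in> {m + r * a |m r. m \<in> M}" using M0 by (intro CollectI exI[of _ 0]) auto
  next
    fix x y assume "x \<in> {m + r * a |m r. m \<in> M}" "y \<in> {m + r * a |m r. m \<in> M}"
    then obtain m1 r1 m2 r2 where "x = m1 + r1 * a" "y = m2 + r2 * a" "m1 \<in> M" "m2 \<in> M" by auto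
    then have "x + y = (m1 + m2) + (r1 + r2) * a" "m1 + m2 \<in> M" by (auto simp: algebra_simps Madd)
    then show "x + y \<in> {m + r * a |m r. m \<in> M}" by blast
  next
    fix r x assume "x \<in> {m + r * a |m r. m \<in> M}"
    then obtain m1 r1 where "x = m1 + r1 * a" "m1 \<in> M" by auto
    then have "r * x = r * m1 + (r * r1) * a" "r * m1 \<in> M" by (auto simp: algebra_simps Mmul2)
    then show "r * x \<in> {m + r * a |m r. m \<in> M}" by blast
  qed
  moreover have "M \<subseteq> J"
  proof
    fix x assume "x \<in> M" then show "x \<in> J" unfolding J_def by (intro CollectI exI[of _ x] exI[of _ 0]) simp
  qed
  moreover have "a \<in> J" unfolding J_def using M0 by (intro CollectI exI[of _ 0] exI[of _ 1]) simp
  ultimately have "J = UNIV" using mx assms by blast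
  then have "1 \<in> J" by auto
  then obtain m r where mr: "1 = m + r * a" "m \<in> M" unfolding J_def by auto
  have "(1 - m) * (1 + m) = 1" using sq[OF mr(2) mr(2)] by (simp add: algebra_simps)
  moreover have "a * r = 1 - m" using mr(1) by (simp add: algebra_simps)
  ultimately have "a * (r * (1 + m)) = 1" by (simp add: mult.assoc[symmetric])
  then show ?thesis by blast
qed

lemma notin_mult: "a \<notin> M \<Longrightarrow> b \<notin> M \<Longrightarrow> a * b \<notin> M"
proof -
  assume "a \<notin> M" "b \<notin> M"
  then obtain c d where "a * c = 1" "b * d = 1" using unit_of_notin by blast
  then have "(a*b) * (c*d) = 1" by (metis mult.assoc mult.left_commute mult_1_right)
  then show ?thesis using notin_of_unit by blast
qed

lemma nz: assumes "m \<in> M" "m \<noteq> 0" "u \<notin> M" shows "m * u \<noteq> 0"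
proof
  assume mu: "m * u = 0"
  obtain v where "u * v = 1" using unit_of_notin assms(3) by blast
  then have "m = m * u * v" by (simp add: mult.assoc)
  then show False using mu assms(2) by simp
qed

lemma sum_in: "finite S \<Longrightarrow> (\<And>i. i \<in> S \<Longrightarrow> t i \<in> M) \<Longrightarrow> sum t S \<in> M"
  by (induct S rule: finite_induct) (auto simp: M0 Madd)

lemma sum_notin:
  assumes "finite S" "i0 \<in> S" "t i0 \<notin> M" "\<And>i. i \<in> S \<Longrightarrow> i \<noteq> i0 \<Longrightarrow> t i \<in> M"
  shows "sum t S \<notin> M"
proof
  assume h: "sum t S \<in> M"
  have "sum t S = t i0 + sum t (S - {i0})" by (rule sum.remove[OF assms(1,2)])
  moreover have "sum t (S - {i0}) \<in> M" using assms by (intro sum_in) auto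
  ultimately have "t i0 = sum t S + (-1) * sum t (S - {i0})" by simp
  moreover have "sum t S + (-1) * sum t (S - {i0}) \<in> M"
    using h \<open>sum t (S - {i0}) \<in> M\<close> by (intro Madd Mmul)
  ultimately show False using assms(3) by simp
qed

lemma low:
  assumes "coeff f a \<notin> M" "\<And>j. j<a \<Longrightarrow> coeff f j \<in> M" "coeff g b \<notin> M" "\<And>j. j<b \<Longrightarrow> coeff g j \<in> M"
  shows "coeff (f*g) (a+b) \<notin> M" and "\<And>j. j < a+b \<Longrightarrow> coeff (f*g) j \<in> M"
proof -
  show "coeff (f*g) (a+b) \<notin> M" unfolding coeff_mult
  proof (rule sum_notin[of _ a])
    show "coeff f a * coeff g (a + b - a) \<notin> M" using assms notin_mult by simp
  next
    fix i assume "i \<in> {..a+b}" "i \<noteq> a"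
    then show "coeff f i * coeff g (a + b - i) \<in> M"
    proof (cases "i < a")
      case True then show ?thesis using assms(2)[of i] Mmul2 by blast
    next
      case False then have "a + b - i < b" using \<open>i \<in> {..a+b}\<close> \<open>i \<noteq> a\<close> by auto
      then show ?thesis using assms(4) Mmul by blast
    qed
  qed auto
  fix j assume "j < a + b"
  show "coeff (f*g) j \<in> M" unfolding coeff_mult
  proof (rule sum_in)
    fix i assume "i \<in> {..j}"
    show "coeff f i * coeff g (j - i) \<in> M"
    proof (cases "i < a")
      case True then show ?thesis using assms(2)[of i] Mmul2 by blast
    next
      case False then have "j - i < b" using \<open>j < a + b\<close> \<open>i \<in> {..j}\<close> by auto
      then show ?thesis using assms(4) Mmul by blast
    qed
  qed simp
qed

lemma high:
  assumes "coeff f a \<notin> M" "\<And>j. j>a \<Longrightarrow> coeff f j \<in> M" "coeff g b \<notin> M" "\<And>j. j>b \<Longrightarrow> coeff g j \<in> M"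
  shows "coeff (f*g) (a+b) \<notin> M" and "\<And>j. j > a+b \<Longrightarrow> coeff (f*g) j \<in> M"
proof -
  show "coeff (f*g) (a+b) \<notin> M" unfolding coeff_mult
  proof (rule sum_notin[of _ a])
    show "coeff f a * coeff g (a + b - a) \<notin> M" using assms notin_mult by simp
  next
    fix i assume "i \<in> {..a+b}" "i \<noteq> a"
    then show "coeff f i * coeff g (a + b - i) \<in> M"
    proof (cases "i > a")
      case True then show ?thesis using assms(2)[of i] Mmul2 by blast
    next
      case False then have "a + b - i > b" using \<open>i \<in> {..a+b}\<close> \<open>i \<noteq> a\<close> by auto
      then show ?thesis using assms(4) Mmul by blast
    qed
  qed auto
  fix j assume "j > a + b"
  show "coeff (f*g) j \<in> M" unfolding coeff_mult
  proof (rule sum_in)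
    fix i assume "i \<in> {..j}"
    show "coeff f i * coeff g (j - i) \<in> M"
    proof (cases "i > a")
      case True then show ?thesis using assms(2)[of i] Mmul2 by blast
    next
      case False then have "j - i > b" using \<open>j > a + b\<close> \<open>i \<in> {..j}\<close> by auto
      then show ?thesis using assms(4) Mmul by blast
    qed
  qed simp
qed

lemma goodd_mult: "goodd M f d \<Longrightarrow> goodd M g e \<Longrightarrow> goodd M (f*g) (d+e)"
  unfolding goodd_def
proof (intro conjI allI impI)
  assume f: "coeff f d \<notin> M \<and> (\<forall>j. j \<noteq> d \<longrightarrow> coeff f j \<in> M)"
    and g: "coeff g e \<notin> M \<and> (\<forall>j. j \<noteq> e \<longrightarrow> coeff g j \<in> M)"
  show "coeff (f * g) (d + e) \<notin> M" using low[of f d g e] f g by auto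
  fix j assume "j \<noteq> d + e"
  then show "coeff (f * g) j \<in> M"
    using low(2)[of f d g e j] high(2)[of f d g e j] f g by (cases "j < d + e") auto
qed

lemma goodd_unique: "goodd M f d \<Longrightarrow> goodd M f d' \<Longrightarrow> d = d'"
  unfolding goodd_def by auto

lemma mult_MP: "(\<forall>i. coeff f i \<in> M) \<Longrightarrow> coeff (f*g) j \<in> M"
  unfolding coeff_mult by (intro sum_in) (simp_all add: Mmul2)

lemma goodd_left:
  assumes "goodd M (f*g) e" shows "\<exists>d. goodd M f d"
proof -
  have fn: "\<exists>j. coeff f j \<notin> M"
    using mult_MP[of f g e] assms unfolding goodd_def by auto
  have gn: "\<exists>j. coeff g j \<notin> M"
    using mult_MP[of g f e] assms unfolding goodd_def by (auto simp: mult.commute)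
  define a where "a = (LEAST j. coeff f j \<notin> M)"
  define b where "b = (LEAST j. coeff g j \<notin> M)"
  define Sf where "Sf = {j. coeff f j \<notin> M}"
  define Sg where "Sg = {j. coeff g j \<notin> M}"
  have finf: "finite Sf"
    by (rule finite_subset[of _ "{..degree f}"]) (use M0 in \<open>auto simp: Sf_def intro!: le_degree\<close>)
  have fing: "finite Sg"
    by (rule finite_subset[of _ "{..degree g}"]) (use M0 in \<open>auto simp: Sg_def intro!: le_degree\<close>)
  define A where "A = Max Sf"
  define B where "B = Max Sg"
  have a1: "coeff f a \<notin> M" unfolding a_def using fn by (metis LeastI)
  have a2: "\<And>j. j < a \<Longrightarrow> coeff f j \<in> M" unfolding a_def using not_less_Least by blast
  have b1: "coeff g b \<notin> M" unfolding b_def using gn by (metis LeastI)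
  have b2: "\<And>j. j < b \<Longrightarrow> coeff g j \<in> M" unfolding b_def using not_less_Least by blast
  have A1: "coeff f A \<notin> M" unfolding A_def using Max_in[OF finf] fn Sf_def by auto
  have A2: "\<And>j. j > A \<Longrightarrow> coeff f j \<in> M" unfolding A_def using Max_ge[OF finf] Sf_def
    by (metis mem_Collect_eq not_le)
  have B1: "coeff g B \<notin> M" unfolding B_def using Max_in[OF fing] gn Sg_def by auto
  have B2: "\<And>j. j > B \<Longrightarrow> coeff g j \<in> M" unfolding B_def using Max_ge[OF fing] Sg_def
    by (metis mem_Collect_eq not_le)
  have "a + b = e" using low(1)[OF a1 a2 b1 b2] assms unfolding goodd_def by auto
  moreover have "A + B = e" using high(1)[OF A1 A2 B1 B2] assms unfolding goodd_def by auto
  moreover have "a \<le> A" using A2 a1 not_le by blast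
  moreover have "b \<le> B" using B2 b1 not_le by blast
  ultimately have "a = A" by simp
  then have "goodd M f a" unfolding goodd_def using a1 a2 A2
    by (metis linorder_neqE_nat)
  then show ?thesis by blast
qed

definition dg :: "'a poly \<Rightarrow> nat" where "dg f = (LEAST d. coeff f d \<notin> M)"

lemma dg_eq: "goodd M f d \<Longrightarrow> dg f = d"
  unfolding dg_def goodd_def by (rule Least_equality) auto

lemma goodd_dg: "goodd M f d \<Longrightarrow> goodd M f (dg f)"
  using dg_eq by simp

lemma prod_good: "(\<forall>f\<in>set fs. goodd M f (dg f)) \<Longrightarrow> goodd M (prod_list fs) (sum_list (map dg fs))"
proof (induct fs)
  case Nil then show ?case using one_notin by (simp add: goodd_def M0)
next
  case (Cons a fs) then show ?case using goodd_mult by simp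
qed

lemma split_list: "goodd M (prod_list fs) e \<Longrightarrow> \<forall>f\<in>set fs. goodd M f (dg f)"
proof (induct fs arbitrary: e)
  case Nil then show ?case by simp
next
  case (Cons a fs)
  then have h: "goodd M (a * prod_list fs) e" by simp
  obtain d where "goodd M a d" using goodd_left[OF h] by blast
  moreover obtain d' where "goodd M (prod_list fs) d'"
    using goodd_left[of "prod_list fs" a e] h by (auto simp: mult.commute)
  ultimately show ?case using Cons goodd_dg by auto
qed

lemma mm0: "(\<forall>i. coeff m i \<in> M) \<Longrightarrow> m * m = 0"
  by (rule poly_eqI) (auto simp: coeff_mult sq intro!: sum.neutral)

lemma goodd0_unit:
  assumes "goodd M f 0" shows "f dvd 1"
proof -
  define u where "u = coeff f 0"
  obtain v where uv: "u * v = 1" using unit_of_notin assms unfolding goodd_def u_def by blast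
  define m where "m = f - [:u:]"
  have mM: "\<forall>i. coeff m i \<in> M" using assms M0 unfolding m_def goodd_def u_def
    by (auto simp: coeff_pCons split: nat.splits)
  have f: "f = [:u:] + m" unfolding m_def by simp
  have "f * ([:v:] - smult (v*v) m) = 1"
    unfolding f using mm0[OF mM] uv
    by (simp add: algebra_simps smult_add_left flip: smult_smult)
       (metis mult.assoc mult.commute mult_1_right one_pCons smult_smult smult_1_left)
  then show ?thesis by (metis dvdI)
qed

lemma unit_coeff0: "f dvd (1 :: 'a poly) \<Longrightarrow> coeff f 0 \<notin> M"
proof -
  assume "f dvd 1"
  then obtain g where "1 = f * g" by (auto elim: dvdE)
  then have "coeff f 0 * coeff g 0 = 1" by (metis coeff_mult_0 one_poly_eq_simps(1) coeff_pCons_0)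
  then show ?thesis using notin_of_unit by blast
qed

lemma irr_d: "irreducible f \<Longrightarrow> goodd M f d \<Longrightarrow> d \<ge> 1"
  using goodd0_unit unfolding irreducible_def by (cases d) auto

lemma irr_c0:
  assumes "irreducible f" "goodd M f d" "d \<ge> 2" shows "coeff f 0 \<noteq> 0"
proof
  assume c0: "coeff f 0 = 0"
  obtain a q where fq: "f = pCons a q" by (cases f)
  then have "a = 0" using c0 by simp
  then have "f = [:0,1:] * q" using fq by simp
  have "coeff f 1 \<in> M" using assms(2,3) unfolding goodd_def by auto
  then have q0: "coeff q 0 \<in> M" using fq by simp
  have "[:0,1:] dvd (1::'a poly) \<or> q dvd 1" using assms(1) \<open>f = [:0,1:] * q\<close> unfolding irreducible_def by blast
  moreover have "\<not> [:0,1:] dvd (1::'a poly)" using unit_coeff0 M0 by fastforce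
  moreover note q0
  ultimately show False using unit_coeff0 by blast
qed

lemma Zlemma:
  assumes "goodd M f d" "goodd M g e" "\<And>j. j < d - s \<Longrightarrow> coeff f j = 0"
    "\<And>j. j < e - s \<Longrightarrow> coeff g j = 0" "j < d + e - s"
  shows "coeff (f*g) j = 0"
  unfolding coeff_mult
proof (rule sum.neutral, rule ballI)
  fix i assume i: "i \<in> {..j}"
  show "coeff f i * coeff g (j - i) = 0"
  proof (cases "i = d")
    case True then show ?thesis using assms(4)[of "j-i"] assms(5) i by auto
  next
    case False
    show ?thesis
    proof (cases "j - i = e")
      case True then show ?thesis using assms(3)[of i] assms(5) i by auto
    next
      case False
      have "coeff f i \<in> M" "coeff g (j - i) \<in> M"
        using \<open>i \<noteq> d\<close> False assms(1,2) unfolding goodd_def by blast+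
      then show ?thesis by (rule sq)
    qed
  qed
qed

lemma NZlemma:
  assumes "goodd M f d" "goodd M g e" "s < s'" "s' \<le> d" "coeff f (d - s') \<noteq> 0"
    "\<And>j. j < e - s \<Longrightarrow> coeff g j = 0"
  shows "coeff (f*g) (d + e - s') \<noteq> 0"
proof -
  define j where "j = d + e - s'"
  define i0 where "i0 = d - s'"
  have i0: "i0 \<in> {..j}" unfolding i0_def j_def by auto
  have rest: "sum (\<lambda>i. coeff f i * coeff g (j - i)) ({..j} - {i0}) = 0"
  proof (rule sum.neutral, rule ballI)
    fix i assume i: "i \<in> {..j} - {i0}"
    show "coeff f i * coeff g (j - i) = 0"
    proof (cases "i = d")
      case True
      then have "j - i < e - s" using i assms(3,4) unfolding j_def by auto
      then have "coeff g (j - i) = 0" using assms(6) by blast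
      then show ?thesis by simp
    next
      case False
      show ?thesis
      proof (cases "j - i = e")
        case True
        then have "i = i0" using i assms(4) unfolding j_def i0_def by auto
        then show ?thesis using i by blast
      next
        case False
        have "coeff f i \<in> M" "coeff g (j - i) \<in> M"
          using \<open>i \<noteq> d\<close> False assms(1,2) unfolding goodd_def by blast+
        then show ?thesis by (rule sq)
      qed
    qed
  qed
  have "coeff (f*g) j = coeff f i0 * coeff g (j - i0) + 0"
    unfolding coeff_mult using sum.remove[OF _ i0, of "\<lambda>i. coeff f i * coeff g (j - i)"] rest by simp
  moreover have "j - i0 = e" unfolding j_def i0_def using assms(4) by auto
  moreover have "coeff f i0 \<in> M" using assms(1,3,4) unfolding goodd_def i0_def by (metis diff_less less_le_trans not_less0 less_irrefl_nat zero_less_iff_neq_zero)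
  moreover have "coeff f i0 \<noteq> 0" using assms(5) unfolding i0_def .
  moreover have "coeff g e \<notin> M" using assms(2) unfolding goodd_def by blast
  ultimately have "coeff (f*g) j \<noteq> 0" using nz[of "coeff f i0" "coeff g e"] by simp
  then show ?thesis unfolding j_def .
qed

lemma prod_good1: "(\<forall>f\<in>set xs. goodd M f 1) \<Longrightarrow> goodd M (prod_list xs) (length xs)"
proof (induct xs)
  case Nil then show ?case using one_notin by (simp add: goodd_def M0)
next
  case (Cons a xs) then show ?case using goodd_mult[of a 1 "prod_list xs" "length xs"] by simp
qed

lemma Zlist: "(\<forall>f\<in>set xs. goodd M f 1) \<Longrightarrow> j < length xs - 1 \<Longrightarrow> coeff (prod_list xs) j = 0"
proof (induct xs arbitrary: j)
  case Nil then show ?case by simp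
next
  case (Cons a xs)
  have ga: "goodd M a 1" using Cons by simp
  have gp: "goodd M (prod_list xs) (length xs)" using prod_good1 Cons.prems(1) by simp
  show ?case using Zlemma[OF ga gp, of 1 j] Cons by simp
qed

lemma main:
  fixes fs :: "'a poly list"
  assumes "0 < n" "prod_list fs = [:0,1:]^n" "\<forall>g\<in>set fs. irreducible g"
  shows "length fs \<noteq> n - 1" and "odd n \<Longrightarrow> length fs \<noteq> 2"
proof -
  have gx: "goodd M ([:0,1:]^n) n" unfolding goodd_def using one_notin M0 by (simp add: coeff_xpow)
  have good: "\<forall>f\<in>set fs. goodd M f (dg f)" using split_list[of fs n] gx assms(2) by simp
  have sum: "sum_list (map dg fs) = n"
    using prod_good[OF good] gx assms(2) goodd_unique by simp
  have ge1: "\<forall>f\<in>set fs. 1 \<le> dg f" using good assms(3) irr_d by blast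
  show "length fs \<noteq> n - 1"
  proof
    assume len: "length fs = n - 1"
    have "\<exists>g\<in>set fs. dg g \<ge> 2"
    proof (rule ccontr)
      assume "\<not> ?thesis"
      then have "\<forall>f\<in>set fs. dg f = 1" using ge1 by force
      then have "sum_list (map dg fs) = length fs" by (induct fs) auto
      then show False using sum len assms(1) by simp
    qed
    then obtain g where g: "g \<in> set fs" "dg g \<ge> 2" by blast
    define fs' where "fs' = remove1 g fs"
    have s1: "dg g + sum_list (map dg fs') = n" using sum_list_map_remove1[OF g(1), of dg] sum fs'_def by simp
    have l1: "length fs' = n - 2" using len g(1) unfolding fs'_def by (simp add: length_remove1)
    have ge1': "\<forall>f\<in>set fs'. 1 \<le> dg f" using ge1 unfolding fs'_def by (meson notin_set_remove1)
    have "length fs' \<le> sum_list (map dg fs')" using sum_list_ge_length[OF ge1'] .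
    then have dg2: "dg g = 2" and s2: "sum_list (map dg fs') = length fs'" using s1 l1 g(2) by auto
    have one: "\<forall>f\<in>set fs'. dg f = 1" using sum_list_eq_length[OF ge1' s2] .
    have good': "\<forall>f\<in>set fs'. goodd M f 1" using one good unfolding fs'_def by (metis notin_set_remove1)
    have gP: "goodd M (prod_list fs') (n-2)"
      using prod_good[of fs'] good unfolding fs'_def using s2 l1 fs'_def by (metis notin_set_remove1)
    have ZP: "\<And>j. j < (n - 2) - 1 \<Longrightarrow> coeff (prod_list fs') j = 0" using Zlist[OF good'] l1 by simp
    have gg: "goodd M g 2" using good g dg2 by metis
    have c0: "coeff g (2 - 2) \<noteq> 0" using irr_c0[OF _ gg] assms(3) g by simp
    have "coeff (g * prod_list fs') (2 + (n-2) - 2) \<noteq> 0"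
      using NZlemma[OF gg gP, of 1 2] c0 ZP by simp
    moreover have "g * prod_list fs' = [:0,1:]^n" using prod_list_remove1[OF g(1)] assms(2) fs'_def by simp
    ultimately show False using assms(1) by (simp add: coeff_xpow split: if_split_asm)
  qed
  show "length fs \<noteq> 2" if "odd n"
  proof
    assume "length fs = 2"
    then obtain f1 f2 where fs: "fs = [f1, f2]"
      by (metis One_nat_def Suc_1 length_0_conv length_Suc_conv)
    have g1: "goodd M f1 (dg f1)" and g2: "goodd M f2 (dg f2)" using good fs by auto
    have i1: "irreducible f1" and i2: "irreducible f2" using assms(3) fs by auto
    have d: "dg f1 + dg f2 = n" using sum fs by simp
    have p: "f1 * f2 = [:0,1:]^n" using assms(2) fs by simp
    have e1: "dg f1 \<ge> 1" "dg f2 \<ge> 1" using ge1 fs by auto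
    have aux: "False" if "goodd M f d" "goodd M g e" "irreducible f" "1 \<le> e" "e < d"
      "f * g = [:0,1:]^(d+e)" for f g d e
    proof -
      have c0: "coeff f (d - d) \<noteq> 0" using irr_c0[OF that(3,1)] that(4,5) by simp
      have "coeff (f*g) (d + e - d) \<noteq> 0"
        using NZlemma[OF that(1,2), of e d] c0 that(5) by simp
      then show False using that(6,4,5) by (simp add: coeff_xpow split: if_split_asm)
    qed
    show False
    proof (cases "dg f1 < dg f2")
      case True
      then show False using aux[OF g2 g1 i2 e1(1) True] p d by (simp add: mult.commute add.commute)
    next
      case False
      moreover have "dg f1 \<noteq> dg f2" using d that by auto
      ultimately have "dg f2 < dg f1" by simp
      then show False using aux[OF g1 g2 i1 e1(2)] p d by simp
    qed
  qed
qed

end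

theorem lemma4p4:
  fixes M :: "'a::comm_ring_1 set" and n :: nat
  assumes "artinian_ring TYPE('a)"
    and "local_ring_with_max M"
    and "M \<noteq> {0}"
    and "\<forall>a\<in>M. \<forall>b\<in>M. a * b = 0"
    and "n > 0"
  shows "n - 1 \<notin> lengths ([:0, 1:] ^ n :: 'a poly)
     \<and> (odd n \<longrightarrow> 2 \<notin> lengths ([:0, 1:] ^ n :: 'a poly))"
proof -
  have mi: "maximal_ideal M" using assms(2) unfolding local_ring_with_max_def by simp
  have "lr M"
  proof (rule lr.intro)
    show "is_ideal M" "M \<noteq> UNIV" using mi unfolding maximal_ideal_def by simp_all
    show "\<And>J. is_ideal J \<Longrightarrow> M \<subseteq> J \<Longrightarrow> J = M \<or> J = UNIV" using mi unfolding maximal_ideal_def by simp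
    show "\<And>a b. a \<in> M \<Longrightarrow> b \<in> M \<Longrightarrow> a * b = 0" using assms(4) by simp
  qed
  have A: "k \<notin> lengths ([:0, 1:] ^ n :: 'a poly)" if "k = n - 1 \<or> (odd n \<and> k = 2)" for k
  proof
    assume "k \<in> lengths ([:0, 1:] ^ n :: 'a poly)"
    then have "\<exists>fs. length fs = k \<and> (\<forall>g\<in>set fs. irreducible g) \<and> prod_list fs = ([:0, 1:] ^ n :: 'a poly)"
      unfolding lengths_def by simp
    then obtain fs :: "'a poly list" where fs: "length fs = k" "\<forall>g\<in>set fs. irreducible g" "prod_list fs = [:0, 1:] ^ n"
      by blast
    have "length fs \<noteq> n - 1" "odd n \<Longrightarrow> length fs \<noteq> 2"
      using lr.main[OF \<open>lr M\<close> assms(5) fs(3) fs(2)] by blast+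
    then show False using that fs(1) by blast
  qed
  show ?thesis using A by blast
qed

end
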